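(* $\mathbb G_2=\widetilde{\mathbb G}_2$, whereas $\mathbb G_n\subsetneq\widetilde{\mathbb G}_n$ for every $n\ge 3$.
   Context: $\mathbb D$ is the open unit disc. For $n\ge 2$ let $\pi_n:\mathbb C^n\to\mathbb C^n$, $\pi_n(z)=(s_1(z),\dots,s_{n-1}(z),p(z))$, where $s_i$ is the $i$-th elementary symmetric polynomial in $z_1,\dots,z_n$ and $p(z)=z_1\cdots z_n$. The symmetrized polydisc is $\mathbb G_n=\pi_n(\mathbb D^n)$. The extended symmetrized polydisc is $\widetilde{\mathbb G}_n=\{(y_1,\dots,y_{n-1},q)\in\mathbb C^n: q\in\mathbb D,\ y_j=\beta_j+\bar\beta_{n-j}q \text{ for some }\beta_1,\dots,\beta_{n-1}\in\mathbb C \text{ with } |\beta_j|+|\beta_{n-j}|<\binom{n}{j},\ j=1,\dots,n-1\}$. *)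

theory Defs
  imports Complex_Main
begin

text \<open>Points of C^n are represented as complex lists of length n.
  A point z of D^n is a function z :: nat => complex, of which only the
  coordinates z 0, ..., z (n-1) are used.\<close>

definition unit_disc :: "complex set" where
  "unit_disc = {w. cmod w < 1}"

definition esym :: "nat \<Rightarrow> nat \<Rightarrow> (nat \<Rightarrow> complex) \<Rightarrow> complex" where
  "esym n i z = (\<Sum>S\<in>{S. S \<subseteq> {..<n} \<and> card S = i}. \<Prod>k\<in>S. z k)"

definition sym_map :: "nat \<Rightarrow> (nat \<Rightarrow> complex) \<Rightarrow> complex list" where
  "sym_map n z = map (\<lambda>i. esym n i z) [1..<n] @ [\<Prod>k<n. z k]"

definition symG :: "nat \<Rightarrow> complex list set" where
  "symG n = {sym_map n z | z. \<forall>k<n. z k \<in> unit_disc}"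

text \<open>Extended symmetrized polydisc. The list ys = [y_1, ..., y_{n-1}] is
  indexed from 0, so y_j = ys ! (j - 1); beta_j = beta j for j = 1..n-1.\<close>
definition extG :: "nat \<Rightarrow> complex list set" where
  "extG n = {ys @ [q] | ys q. q \<in> unit_disc \<and> length ys = n - 1 \<and>
     (\<exists>\<beta>::nat \<Rightarrow> complex. \<forall>j\<in>{1..n-1}.
        ys ! (j - 1) = \<beta> j + cnj (\<beta> (n - j)) * q \<and>
        cmod (\<beta> j) + cmod (\<beta> (n - j)) < real (n choose j))}"

end

theory Submission
  imports Defs
begin


definition bb :: "complex \<Rightarrow> complex \<Rightarrow> complex" where
  "bb a c = a * of_real ((1 - (norm c)^2) / (1 - (norm a * norm c)^2))"

lemma bb_eq:
  assumes "norm a < 1" "norm c < 1"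
  shows "bb a c + cnj (bb c a) * (a * c) = a"
proof -
  have "norm a * norm c \<le> norm a" using assms by (intro mult_left_le) auto
  then have ac: "norm a * norm c < 1" using assms by simp
  have "(norm a * norm c)^2 < 1" using ac by (simp add: abs_square_less_1)
  then have d: "1 - (norm a * norm c)^2 \<noteq> 0" by simp
  have c2: "c * cnj c = of_real ((norm c)^2)" using complex_norm_square[of c] by (simp only:)
  define D where "D = 1 - (norm a * norm c)^2"
  define X where "X = (1 - (norm c)^2) / D"
  define Y where "Y = (1 - (norm a)^2) / D"
  have 1: "bb a c = a * of_real X" unfolding bb_def X_def D_def by simp
  have 2: "bb c a = c * of_real Y" unfolding bb_def Y_def D_def by (simp add: mult.commute)
  have "bb a c + cnj (bb c a) * (a * c) = a * of_real X + a * (c * cnj c) * of_real Y"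
    unfolding 1 2 by (simp add: algebra_simps)
  also have "\<dots> = a * of_real (X + (norm c)^2 * Y)" unfolding c2 by (simp add: algebra_simps)
  also have "X + (norm c)^2 * Y = 1" unfolding X_def Y_def using d unfolding D_def[symmetric]
    by (simp add: field_simps D_def power_mult_distrib)
  finally show ?thesis by simp
qed

lemma bb_norm:
  assumes "norm a < 1" "norm c < 1"
  shows "norm (bb a c) + norm (bb c a) < 1"
proof -
  define x where "x = norm a"
  define y where "y = norm c"
  have x: "0 \<le> x" "x < 1" and y: "0 \<le> y" "y < 1" using assms x_def y_def by auto
  have "x * y \<le> x" using x y by (intro mult_left_le) auto
  then have xy: "x * y < 1" using x by simp
  have xy0: "0 \<le> x * y" using x y by simp
  have "(x*y)^2 < 1" using xy xy0 by (simp add: abs_square_less_1)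
  then have D: "0 < 1 - (x*y)^2" by simp
  have "x^2 < 1" using x by (simp add: abs_square_less_1)
  then have r1: "0 \<le> (1 - x^2) / (1 - (x*y)^2)" using D by simp
  have "y^2 < 1" using y by (simp add: abs_square_less_1)
  then have r2: "0 \<le> (1 - y^2) / (1 - (x*y)^2)" using D by simp
  have n1: "norm (bb a c) = x * ((1 - y^2) / (1 - (x*y)^2))"
    unfolding bb_def x_def[symmetric] y_def[symmetric] norm_mult norm_of_real abs_of_nonneg[OF r2] ..
  have n2: "norm (bb c a) = y * ((1 - x^2) / (1 - (x*y)^2))"
    unfolding bb_def x_def[symmetric] y_def[symmetric] norm_mult norm_of_real abs_of_nonneg[OF r1] mult.commute[of y x] ..
  have p: "0 < (1-x)*(1-y)*(1-x*y)" using x y xy by simp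
  have "x * (1 - y^2) + y * (1 - x^2) < 1 - (x*y)^2"
    using p by (simp add: algebra_simps power2_eq_square)
  then have "(x * (1 - y^2) + y * (1 - x^2)) / (1 - (x*y)^2) < 1" using D by simp
  then show ?thesis unfolding n1 n2 by (simp add: add_divide_distrib)
qed

lemma prod_lt1:
  "finite S \<Longrightarrow> S \<noteq> {} \<Longrightarrow> \<forall>k\<in>S. cmod (z k) < 1 \<Longrightarrow> cmod (\<Prod>k\<in>S. z k) < 1"
proof (induction S rule: finite_ne_induct)
  case (singleton x) then show ?case by simp
next
  case (insert x F)
  then have "cmod (z x) < 1" "cmod (\<Prod>k\<in>F. z k) < 1" by auto
  moreover have "cmod (z x) * cmod (\<Prod>k\<in>F. z k) \<le> cmod (z x)"
    using calculation by (intro mult_left_le) auto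
  ultimately show ?case using insert by (simp add: norm_mult)
qed

definition ksets :: "nat \<Rightarrow> nat \<Rightarrow> nat set set" where
  "ksets n j = {S. S \<subseteq> {..<n} \<and> card S = j}"

lemma ksets_finite: "finite (ksets n j)"
  unfolding ksets_def by (rule finite_subset[of _ "Pow {..<n}"]) auto

lemma ksets_card: "card (ksets n j) = n choose j"
  unfolding ksets_def using n_subsets[of "{..<n}" j] by simp

lemma ksets_ne: "j \<le> n \<Longrightarrow> ksets n j \<noteq> {}"
  unfolding ksets_def by (rule ccontr) (auto dest: spec[of _ "{..<j}"])

lemma compl_reindex:
  assumes "j \<le> n"
  shows "(\<Sum>T\<in>ksets n (n-j). h T) = (\<Sum>S\<in>ksets n j. h ({..<n} - S))"
proof (rule sum.reindex_bij_witness[of _ "\<lambda>T. {..<n} - T" "\<lambda>T. {..<n} - T"])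
  fix S assume "S \<in> ksets n j"
  then show "{..<n} - S \<in> ksets n (n-j)" "{..<n} - ({..<n} - S) = S"
    unfolding ksets_def by (auto simp: card_Diff_subset finite_subset)
next
  fix T assume "T \<in> ksets n (n-j)"
  then have T: "T \<subseteq> {..<n}" "card T = n - j" unfolding ksets_def by auto
  then have "card ({..<n} - T) = j" using assms by (simp add: card_Diff_subset finite_subset)
  then show "{..<n} - T \<in> ksets n j" "{..<n} - ({..<n} - T) = T"
    unfolding ksets_def using T by auto
qed (auto simp: ksets_def Diff_Diff_Int inf.absorb2)

lemma esym1: "esym n 1 z = (\<Sum>k<n. z k)"
proof -
  have "{S. S \<subseteq> {..<n} \<and> card S = 1} = (\<lambda>k. {k}) ` {..<n}"
    by (auto simp: card_1_singleton_iff)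
  then show ?thesis unfolding esym_def by (simp add: sum.reindex)
qed



lemma symG_sub_extG:
  assumes n: "n \<ge> 1" and z: "\<forall>k<n. z k \<in> unit_disc"
  shows "sym_map n z \<in> extG n"
proof -
  define U where "U = {..<n::nat}"
  define f where "f S = (\<Prod>k\<in>S. z k)" for S
  define P where "P = f U"
  define g where "g S = bb (f S) (f (U - S))" for S
  define \<beta> where "\<beta> j = (\<Sum>S\<in>ksets n j. g S)" for j
  define ys where "ys = map (\<lambda>i. esym n i z) [1..<n]"
  have zk: "\<And>k. k \<in> U \<Longrightarrow> cmod (z k) < 1" using z unfolding U_def unit_disc_def by auto
  have fl: "cmod (f S) < 1" if "S \<subseteq> U" "S \<noteq> {}" for S
    unfolding f_def using that zk by (intro prod_lt1) (auto simp: U_def finite_subset)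
  have PD: "P \<in> unit_disc" unfolding P_def unit_disc_def using n fl[of U] by (auto simp: U_def lessThan_empty_iff)
  have len: "length ys = n - 1" unfolding ys_def by simp
  have key: "ys ! (j - 1) = \<beta> j + cnj (\<beta> (n - j)) * P \<and>
        cmod (\<beta> j) + cmod (\<beta> (n - j)) < real (n choose j)" if j: "j \<in> {1..n-1}" for j
  proof -
    have jn: "j \<le> n" using j by auto
    have jl: "j - 1 < length [1..<n]" using j by auto
    have jj: "[1..<n] ! (j - 1) = j" using j by (subst nth_upt) auto
    have ys_j: "ys ! (j - 1) = esym n j z" unfolding ys_def nth_map[OF jl] jj ..
    have Sprops: "S \<subseteq> U" "S \<noteq> {}" "U - S \<subseteq> U" "U - S \<noteq> {}" "U - (U - S) = S"
      if "S \<in> ksets n j" for S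
    proof -
      have S: "S \<subseteq> U" "card S = j" using that unfolding ksets_def U_def by auto
      then have "card (U - S) = n - j" unfolding U_def by (simp add: card_Diff_subset finite_subset)
      then show "S \<subseteq> U" "S \<noteq> {}" "U - S \<subseteq> U" "U - S \<noteq> {}" "U - (U - S) = S"
        using S j by auto
    qed
    have bn: "\<beta> (n - j) = (\<Sum>S\<in>ksets n j. g (U - S))"
      unfolding \<beta>_def U_def by (rule compl_reindex[OF jn])
    have gc: "g (U - S) = bb (f (U - S)) (f S)" if "S \<in> ksets n j" for S
      unfolding g_def using Sprops[OF that] by simp
    have PS: "P = f S * f (U - S)" if "S \<in> ksets n j" for S
      unfolding P_def f_def using Sprops[OF that]
      using prod.subset_diff[of S U z] by (simp add: U_def mult.commute)
    have "esym n j z = (\<Sum>S\<in>ksets n j. f S)" unfolding esym_def ksets_def f_def ..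
    also have "\<dots> = (\<Sum>S\<in>ksets n j. g S + cnj (g (U - S)) * P)"
    proof (rule sum.cong[OF refl])
      fix S assume S: "S \<in> ksets n j"
      show "f S = g S + cnj (g (U - S)) * P"
        using bb_eq[OF fl[OF Sprops(1,2)[OF S]] fl[OF Sprops(3,4)[OF S]]] Sprops(5)[OF S] PS[OF S]
        by (simp add: g_def)
    qed
    also have "\<dots> = \<beta> j + cnj (\<beta> (n - j)) * P"
      unfolding bn by (simp add: \<beta>_def sum.distrib sum_distrib_right)
    finally have e: "ys ! (j - 1) = \<beta> j + cnj (\<beta> (n - j)) * P" using ys_j by simp
    have "cmod (\<beta> j) + cmod (\<beta> (n - j)) \<le>
          (\<Sum>S\<in>ksets n j. cmod (g S)) + (\<Sum>S\<in>ksets n j. cmod (g (U - S)))"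
      unfolding bn unfolding \<beta>_def by (intro add_mono norm_sum)
    also have "\<dots> = (\<Sum>S\<in>ksets n j. cmod (g S) + cmod (g (U - S)))"
      by (simp add: sum.distrib)
    also have "\<dots> < (\<Sum>S\<in>ksets n j. 1)"
    proof (rule sum_strict_mono[OF ksets_finite ksets_ne[OF jn]])
      fix S assume S: "S \<in> ksets n j"
      show "cmod (g S) + cmod (g (U - S)) < 1"
        unfolding gc[OF S] unfolding g_def
        by (rule bb_norm[OF fl[OF Sprops(1,2)[OF S]] fl[OF Sprops(3,4)[OF S]]])
    qed
    also have "\<dots> = real (n choose j)" by (simp add: ksets_card)
    finally show ?thesis using e by simp
  qed
  have "sym_map n z = ys @ [P]" unfolding sym_map_def ys_def P_def f_def U_def by simp
  then show ?thesis unfolding extG_def using PD len key by blast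
qed



lemma symG_subset: assumes "n \<ge> 1" shows "symG n \<subseteq> extG n"
proof
  fix x assume "x \<in> symG n"
  then obtain z where "x = sym_map n z" "\<forall>k<n. z k \<in> unit_disc" unfolding symG_def by auto
  then show "x \<in> extG n" using symG_sub_extG assms by simp
qed

lemma root_in_disc:
  fixes u v :: complex
  assumes uv: "norm (u * v) < 1"
    and h: "norm (u + v - cnj (u + v) * (u * v)) < 1 - (norm (u * v))^2"
  shows "norm u < 1"
proof (rule ccontr)
  assume "\<not> norm u < 1"
  then have x1: "norm u \<ge> 1" by simp
  define x where "x = norm u"
  define y where "y = norm v"
  have xy: "x * y < 1" using uv by (simp add: x_def y_def norm_mult)
  have y0: "0 \<le> y" by (simp add: y_def)
  have "y \<le> x * y" using x1 y0 unfolding x_def by (simp add: mult_right_mono[of 1 "norm u" y, simplified])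
  then have y1: "y < 1" using xy by simp
  have eq: "u + v - cnj (u + v) * (u * v) = u * of_real (1 - y^2) + v * of_real (1 - x^2)"
  proof -
    have e1: "u * cnj u = of_real (x^2)" using complex_norm_square[of u] by (simp only: x_def)
    have e2: "v * cnj v = of_real (y^2)" using complex_norm_square[of v] by (simp only: y_def)
    have "u + v - cnj (u + v) * (u * v) = u - u * (v * cnj v) + (v - v * (u * cnj u))"
      unfolding complex_cnj_add by algebra
    also have "\<dots> = u - u * of_real (y^2) + (v - v * of_real (x^2))" by (simp only: e1 e2)
    also have "\<dots> = u * of_real (1 - y^2) + v * of_real (1 - x^2)"
      by (simp only: of_real_diff of_real_1 right_diff_distrib mult_1_right)
    finally show ?thesis .
  qed
  have n1: "norm (u * of_real (1 - y^2)) = x * (1 - y^2)"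
  proof -
    have "y^2 \<le> 1" using y0 y1 by (simp add: power_le_one)
    then have "\<bar>1 - y^2\<bar> = 1 - y^2" by simp
    then show ?thesis unfolding norm_mult norm_of_real x_def by simp
  qed
  have n2: "norm (v * of_real (1 - x^2)) = y * (x^2 - 1)"
  proof -
    have "1 \<le> x^2" using x1 unfolding x_def by (simp add: one_le_power)
    then have "\<bar>1 - x^2\<bar> = x^2 - 1" by simp
    then show ?thesis unfolding norm_mult norm_of_real y_def by simp
  qed
  have "x * (1 - y^2) - y * (x^2 - 1) \<le> norm (u + v - cnj (u + v) * (u * v))"
    unfolding eq using norm_diff_ineq[of "u * of_real (1 - y^2)" "v * of_real (1 - x^2)"] n1 n2 by simp
  moreover have "0 \<le> (x - 1) * (1 - y) * (1 - x * y)"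
  proof -
    have "0 \<le> x - 1" "0 \<le> 1 - y" "0 \<le> 1 - x * y" using x1 y1 xy unfolding x_def by auto
    then show ?thesis by (intro mult_nonneg_nonneg)
  qed
  moreover have "x * (1 - y^2) - y * (x^2 - 1) - (1 - (x*y)^2) = (x - 1) * (1 - y) * (1 - x * y)"
    unfolding power2_eq_square by algebra
  moreover have "(norm (u * v))^2 = (x * y)^2" unfolding x_def y_def by (simp add: norm_mult)
  ultimately show False using h by linarith
qed

lemma sym2: "sym_map 2 z = [z 0 + z 1, z 0 * z 1]"
  using esym1[of 2 z] by (simp add: sym_map_def numeral_2_eq_2)

lemma extG2_subset: "extG 2 \<subseteq> symG 2"
proof
  fix x assume "x \<in> extG 2"
  then obtain ys q \<beta> where x: "x = ys @ [q]" and q: "q \<in> unit_disc" and l: "length ys = 1"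
    and b: "\<forall>j\<in>{1..1}. ys ! (j - 1) = \<beta> j + cnj (\<beta> (2 - j)) * q \<and>
        cmod (\<beta> j) + cmod (\<beta> (2 - j)) < real (2 choose j)"
    unfolding extG_def by auto
  obtain y where ys: "ys = [y]" using l by (auto simp: length_Suc_conv)
  have yb: "y = \<beta> 1 + cnj (\<beta> 1) * q" and bn: "cmod (\<beta> 1) < 1" using b ys by auto
  have q1: "norm q < 1" using q unfolding unit_disc_def by simp
  define r where "r = csqrt (y^2 - 4 * q)"
  define z where "z = (\<lambda>k::nat. if k = 0 then (y + r) / 2 else (y - r) / 2)"
  have sum: "z 0 + z 1 = y" unfolding z_def by (simp add: field_simps)
  have prod: "z 0 * z 1 = q"
  proof -
    have "z 0 * z 1 = (y^2 - r^2) / 4" unfolding z_def by (simp add: field_simps power2_eq_square)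
    then show ?thesis unfolding r_def by simp
  qed
  have crit: "norm (z 0 + z 1 - cnj (z 0 + z 1) * (z 0 * z 1)) < 1 - (norm (z 0 * z 1))^2"
  proof -
    have "q * cnj q = of_real ((norm q)^2)" using complex_norm_square[of q] by (simp only:)
    then have "y - cnj y * q = \<beta> 1 * of_real (1 - (norm q)^2)"
      unfolding yb by (simp add: algebra_simps)
    moreover have "(norm q)^2 < 1" using q1 by (simp add: abs_square_less_1)
    moreover have "\<bar>1 - (norm q)^2\<bar> = 1 - (norm q)^2" using \<open>(norm q)^2 < 1\<close> by simp
    ultimately have "norm (y - cnj y * q) = norm (\<beta> 1) * (1 - (norm q)^2)"
      by (simp only: norm_mult norm_of_real)
    also have "\<dots> < 1 - (norm q)^2" using bn \<open>(norm q)^2 < 1\<close> by simp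
    finally show ?thesis unfolding sum prod .
  qed
  have pq: "norm (z 0 * z 1) < 1" using prod q1 by simp
  have z0: "norm (z 0) < 1" by (rule root_in_disc[OF pq crit])
  have z1: "norm (z 1) < 1"
    by (rule root_in_disc[of "z 1" "z 0"]) (use pq crit in \<open>simp_all add: ac_simps\<close>)
  have "x = sym_map 2 z" unfolding sym2 x ys sum prod by simp
  moreover have "\<forall>k<2. z k \<in> unit_disc" using z0 z1 unfolding unit_disc_def
    by (auto simp: less_2_cases_iff)
  ultimately show "x \<in> symG 2" unfolding symG_def by blast
qed

lemma strict:
  assumes n: "n \<ge> 3"
  shows "symG n \<noteq> extG n"
proof -
  define ys where "ys = map (\<lambda>i. if i = 1 then of_nat (n - 1) else (0::complex)) [1..<n]"
  define \<beta> where "\<beta> j = (if j = 1 then of_nat (n - 1) else (0::complex))" for j :: nat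
  have inE: "ys @ [0] \<in> extG n"
    unfolding extG_def
  proof (intro CollectI exI conjI)
    show "ys @ [0] = ys @ [0]" "(0::complex) \<in> unit_disc" "length ys = n - 1"
      by (auto simp: ys_def unit_disc_def)
    show "\<forall>j\<in>{1..n - 1}. ys ! (j - 1) = \<beta> j + cnj (\<beta> (n - j)) * 0 \<and>
        cmod (\<beta> j) + cmod (\<beta> (n - j)) < real (n choose j)"
    proof
      fix j assume j: "j \<in> {1..n-1}"
      have jl: "j - 1 < length [1..<n]" using j by auto
      have jj: "[1..<n] ! (j - 1) = j" using j by (subst nth_upt) auto
      have e: "ys ! (j - 1) = \<beta> j" unfolding ys_def nth_map[OF jl] jj \<beta>_def ..
      have "j \<le> n" using j by auto
      then have pos: "0 < n choose j" by simp
      have "cmod (\<beta> j) + cmod (\<beta> (n - j)) < real (n choose j)"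
      proof (cases "j = 1")
        case True
        then show ?thesis using n by (simp add: \<beta>_def del: of_nat_diff)
      next
        case False
        show ?thesis
        proof (cases "n - j = 1")
          case True
          then have "j = n - 1" using j by auto
          then have "n choose j = n" using n binomial_symmetric[of 1 n] by simp
          then show ?thesis using True False n by (simp add: \<beta>_def del: of_nat_diff)
        next
          case False2: False
          then show ?thesis using False pos by (simp add: \<beta>_def)
        qed
      qed
      then show "ys ! (j - 1) = \<beta> j + cnj (\<beta> (n - j)) * 0 \<and>
        cmod (\<beta> j) + cmod (\<beta> (n - j)) < real (n choose j)" using e by simp
    qed
  qed
  have notG: "ys @ [0] \<notin> symG n"
  proof
    assume "ys @ [0] \<in> symG n"
    then obtain z where e: "ys @ [0] = sym_map n z" and z: "\<forall>k<n. z k \<in> unit_disc"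
      unfolding symG_def by auto
    have "(\<Prod>k<n. z k) = 0" using e unfolding sym_map_def by simp
    then obtain m where m: "m < n" "z m = 0" by auto
    have a: "ys ! 0 = esym n 1 z" using e n unfolding sym_map_def
      by (simp add: nth_append ys_def upt_conv_Cons)
    have b: "ys ! 0 = of_nat (n - 1)" using n by (simp add: ys_def upt_conv_Cons del: of_nat_diff)
    have s1: "(\<Sum>k<n. z k) = of_nat (n - 1)" by (metis a b esym1)
    have "norm (\<Sum>k<n. z k) \<le> (\<Sum>k<n. norm (z k))" by (rule norm_sum)
    also have "\<dots> = (\<Sum>k\<in>{..<n} - {m}. norm (z k))"
      using m sum.remove[of "{..<n}" m "\<lambda>k. norm (z k)"] by simp
    also have "\<dots> < (\<Sum>k\<in>{..<n} - {m}. 1)"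
    proof (rule sum_strict_mono)
      have "(if m = 0 then 1 else 0) \<in> {..<n} - {m}" using n by auto
      then show "{..<n} - {m} \<noteq> {}" by blast
    next
      fix k assume "k \<in> {..<n} - {m}"
      then show "norm (z k) < 1" using z unfolding unit_disc_def by auto
    qed simp
    also have "\<dots> = real (n - 1)" using m by simp
    finally show False unfolding s1 by simp
  qed
  show ?thesis using inE notG by blast
qed

theorem mainTheorem1:
  shows "symG 2 = extG 2 \<and> (\<forall>n::nat. n \<ge> 3 \<longrightarrow> symG n \<subset> extG n)"
proof
  show "symG 2 = extG 2" using symG_subset[of 2] extG2_subset by (intro equalityI) simp_all
  show "\<forall>n::nat. n \<ge> 3 \<longrightarrow> symG n \<subset> extG n"
  proof (intro allI impI)
    fix n :: nat assume n: "n \<ge> 3"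
    have "symG n \<subseteq> extG n" using n by (intro symG_subset) simp
    moreover have "symG n \<noteq> extG n" using n by (rule strict)
    ultimately show "symG n \<subset> extG n" by (rule psubsetI)
  qed
qed

end
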